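(* Let $Q \ll P$ be probability measures on a Polish space $\Omega$, $r = dQ/dP$, and let $f \in \mathcal{F}$ be such that $0 < D_f(Q\|P) < \infty$. Let $\epsilon > 0$ and $\gamma \in (0,1)$. Let $M > 0$ be such that $\widetilde{M} := M / W_P(M)$ satisfies $f'(\widetilde{M}) = D_f(Q\|P)/(\gamma\epsilon)$, and let $k$ be a positive integer with $k \ge \widetilde{M} \ln\!\big(1/((1-\gamma)\epsilon)\big)$. Consider the following budgeted rejection sampler: let $X_1, X_2, \dots$ be i.i.d. $P$-distributed, $U_1, U_2, \dots$ i.i.d. uniform on $[0,1]$ and independent of the $X_i$; let $K = \min\{i \ge 1 : U_i \le r_M(X_i)/\widetilde{M}\}$ where $r_M(x) = (r(x) \wedge M)/W_P(M)$; if $K \le k$ output $X_K$, and otherwise output one of $X_1, \dots, X_k$ chosen uniformly at random (independently of everything else). Then the law $\widetilde{Q}$ of the output satisfies $D_{TV}(\widetilde{Q}, Q) \le \epsilon$. In particular a sample complexity of $\ln\!\big(\tfrac{1}{(1-\gamma)\epsilon}\big)\,(f')^{-1}\!\big(\tfrac{D_f(Q\|P)}{\gamma\epsilon}\big)$ suffices.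
   Context: $a \wedge b = \min\{a,b\}$. $\mathcal{F}$ is the set of convex functions $f : [0,\infty) \to \mathbb{R}_{\ge 0} \cup \{\infty\}$ with $f(1) = 0$ and $f'(1) = 0$ (assumed differentiable). For $f \in \mathcal{F}$, the $f$-divergence is $D_f(Q\|P) = \mathbb{E}_{X \sim P}[f(r(X))]$. Define $w_P(h) = \mathbb{P}_{X \sim P}[r(X) \ge h]$ and $W_P(h) = \int_0^h w_P(\eta)\,d\eta$ (equivalently $W_P(h) = \mathbb{E}_{X\sim P}[r(X) \wedge h]$). The total variation distance is $D_{TV}(Q, P) = \sup_B |Q(B) - P(B)|$. The measure $Q_M$ with $dQ_M/dP = r_M$ is a probability measure and $r_M \le \widetilde{M}$. *)

theory Defs
  imports "HOL-Probability.Probability"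
begin

definition ext_convex_nonneg :: "(real \<Rightarrow> ereal) \<Rightarrow> bool" where
  "ext_convex_nonneg f \<longleftrightarrow>
     (\<forall>x\<ge>0. \<forall>y\<ge>0. \<forall>t::real. 0 \<le> t \<and> t \<le> 1 \<longrightarrow>
        f ((1 - t) * x + t * y) \<le> ereal (1 - t) * f x + ereal t * f y)"

definition fdiv :: "'a measure \<Rightarrow> (real \<Rightarrow> ereal) \<Rightarrow> ('a \<Rightarrow> real) \<Rightarrow> ennreal" where
  "fdiv P f r = (\<integral>\<^sup>+ x. e2ennreal (f (r x)) \<partial>P)"

definition Wfun :: "'a measure \<Rightarrow> ('a \<Rightarrow> real) \<Rightarrow> real \<Rightarrow> real" where
  "Wfun P r h = (\<integral> x. min (r x) h \<partial>P)"

definition tv_dist :: "'a measure \<Rightarrow> 'a measure \<Rightarrow> real" where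
  "tv_dist Q P = (SUP B \<in> sets P. \<bar>measure Q B - measure P B\<bar>)"

definition rM :: "'a measure \<Rightarrow> ('a \<Rightarrow> real) \<Rightarrow> real \<Rightarrow> 'a \<Rightarrow> real" where
  "rM P r M x = min (r x) M / Wfun P r M"

definition Mtilde :: "'a measure \<Rightarrow> ('a \<Rightarrow> real) \<Rightarrow> real \<Rightarrow> real" where
  "Mtilde P r M = M / Wfun P r M"

text \<open>The outcome is a pair of an
  infinite sequence ((X_0,U_0),(X_1,U_1),...) (0-indexed) and an index j in {0..<k}
  (the uniform fallback choice). Index i is accepted iff U_i <= r_M(X_i)/M tilde;
  K <= k iff some index i < k is accepted.\<close>
definition brs_out :: "'a measure \<Rightarrow> ('a \<Rightarrow> real) \<Rightarrow> real \<Rightarrow> nat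
                        \<Rightarrow> (nat \<Rightarrow> 'a \<times> real) \<times> nat \<Rightarrow> 'a" where
  "brs_out P r M k \<omega> =
     (let xs = fst \<omega>; j = snd \<omega>;
          acc = (\<lambda>i. snd (xs i) \<le> rM P r M (fst (xs i)) / Mtilde P r M)
      in if \<exists>i<k. acc i then fst (xs (LEAST i. acc i)) else fst (xs j))"

definition brs_space :: "'a measure \<Rightarrow> nat \<Rightarrow> ((nat \<Rightarrow> 'a \<times> real) \<times> nat) measure" where
  "brs_space P k =
     (\<Pi>\<^sub>M i\<in>UNIV. (P \<Otimes>\<^sub>M uniform_measure lborel {0..1::real}))
       \<Otimes>\<^sub>M measure_pmf (pmf_of_set {..<k})"

definition brs_law :: "'a measure \<Rightarrow> ('a \<Rightarrow> real) \<Rightarrow> real \<Rightarrow> nat \<Rightarrow> 'a measure" where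
  "brs_law P r M k = distr (brs_space P k) P (brs_out P r M k)"

end

theory Submission
  imports Defs
begin

lemma unif_le:
  fixes t :: real assumes "0 \<le> t" "t \<le> 1"
  shows "emeasure (uniform_measure lborel {0..1::real}) {u. u \<le> t} = ennreal t"
proof -
  have "{0..1::real} \<inter> {u. u \<le> t} = {0..t}" using assms by auto
  then show ?thesis using assms by (simp add: divide_ennreal_def)
qed

lemma N_meas:
  fixes P :: "'a measure" and g :: "'a \<Rightarrow> real"
  assumes "prob_space P" and g: "g \<in> borel_measurable P" and g01: "\<And>x. 0 \<le> g x \<and> g x \<le> 1"
    and B: "B \<in> sets P"
  shows "emeasure (P \<Otimes>\<^sub>M uniform_measure lborel {0..1::real})
           {z \<in> space (P \<Otimes>\<^sub>M uniform_measure lborel {0..1::real}). fst z \<in> B \<and> snd z \<le> g (fst z)}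
         = (\<integral>\<^sup>+ x. indicator B x * ennreal (g x) \<partial>P)"
proof -
  let ?U = "uniform_measure lborel {0..1::real}"
  interpret U: prob_space ?U by (intro prob_space_uniform_measure) auto
  interpret P: prob_space P by fact
  have ms: "{z \<in> space (P \<Otimes>\<^sub>M ?U). fst z \<in> B \<and> snd z \<le> g (fst z)} \<in> sets (P \<Otimes>\<^sub>M ?U)"
    using g B by measurable
  have "emeasure (P \<Otimes>\<^sub>M ?U) {z \<in> space (P \<Otimes>\<^sub>M ?U). fst z \<in> B \<and> snd z \<le> g (fst z)}
     = (\<integral>\<^sup>+ x. emeasure ?U (Pair x -` {z \<in> space (P \<Otimes>\<^sub>M ?U). fst z \<in> B \<and> snd z \<le> g (fst z)}) \<partial>P)"
    by (rule U.emeasure_pair_measure_alt[OF ms])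
  also have "\<dots> = (\<integral>\<^sup>+ x. indicator B x * ennreal (g x) \<partial>P)"
  proof (rule nn_integral_cong)
    fix x assume x: "x \<in> space P"
    show "emeasure ?U (Pair x -` {z \<in> space (P \<Otimes>\<^sub>M ?U). fst z \<in> B \<and> snd z \<le> g (fst z)}) = indicator B x * ennreal (g x)"
    proof (cases "x \<in> B")
      case True
      then have "Pair x -` {z \<in> space (P \<Otimes>\<^sub>M ?U). fst z \<in> B \<and> snd z \<le> g (fst z)} = {u. u \<le> g x}"
        using x by (auto simp: space_pair_measure)
      then show ?thesis using True unif_le g01 by simp
    next
      case False
      then have "Pair x -` {z \<in> space (P \<Otimes>\<^sub>M ?U). fst z \<in> B \<and> snd z \<le> g (fst z)} = {}"
        by auto
      then show ?thesis using False by simp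
    qed
  qed
  finally show ?thesis .
qed

definition out_g :: "('a \<Rightarrow> real) \<Rightarrow> nat \<Rightarrow> (nat \<Rightarrow> 'a \<times> real) \<times> nat \<Rightarrow> 'a" where
  "out_g g k \<omega> =
     (let xs = fst \<omega>; j = snd \<omega>;
          acc = (\<lambda>i. snd (xs i) \<le> g (fst (xs i)))
      in if \<exists>i<k. acc i then fst (xs (LEAST i. acc i)) else fst (xs j))"

lemma out_g_meas:
  fixes P :: "'a measure"
  assumes g[measurable]: "g \<in> borel_measurable P"
  shows "out_g g k \<in> brs_space P k \<rightarrow>\<^sub>M P"
proof -
  let ?S = "brs_space P k"
  have c[measurable]: "(\<lambda>\<omega>. fst (fst \<omega> i)) \<in> ?S \<rightarrow>\<^sub>M P" for i
    unfolding brs_space_def by measurable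
  have c2[measurable]: "(\<lambda>\<omega>. snd (fst \<omega> i)) \<in> ?S \<rightarrow>\<^sub>M borel" for i
    unfolding brs_space_def by measurable
  have j[measurable]: "snd \<in> ?S \<rightarrow>\<^sub>M count_space UNIV"
  proof -
    have "snd \<in> ?S \<rightarrow>\<^sub>M measure_pmf (pmf_of_set {..<k})" unfolding brs_space_def by (rule measurable_snd)
    then show ?thesis by (metis measurable_cong_sets sets_measure_pmf_count_space)
  qed
  have L[measurable]: "(\<lambda>\<omega>. LEAST i. snd (fst \<omega> i) \<le> g (fst (fst \<omega> i))) \<in> ?S \<rightarrow>\<^sub>M count_space UNIV"
    by measurable
  have A: "(\<lambda>\<omega>. fst (fst \<omega> (LEAST i. snd (fst \<omega> i) \<le> g (fst (fst \<omega> i))))) \<in> ?S \<rightarrow>\<^sub>M P"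
    by (rule measurable_compose_countable[OF c L])
  have B: "(\<lambda>\<omega>. fst (fst \<omega> (snd \<omega>))) \<in> ?S \<rightarrow>\<^sub>M P"
    by (rule measurable_compose_countable[OF c j])
  have pr[measurable]: "Measurable.pred ?S (\<lambda>\<omega>. \<exists>i<k. snd (fst \<omega> i) \<le> g (fst (fst \<omega> i)))"
    by measurable
  show ?thesis unfolding out_g_def Let_def
    apply (rule measurable_If[OF A B]) using pr unfolding pred_def by simp
qed

lemma sampling_bounds:
  fixes P :: "'a measure" and g :: "'a \<Rightarrow> real"
  assumes Pp: "prob_space P" and g[measurable]: "g \<in> borel_measurable P"
    and g01: "\<And>x. 0 \<le> g x \<and> g x \<le> 1" and B[measurable]: "B \<in> sets P"
  defines "p \<equiv> (\<integral>x. g x \<partial>P)" and "GB \<equiv> (\<integral>x. indicator B x * g x \<partial>P)"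
  shows "(\<Sum>i<k. (1 - p) ^ i * GB) \<le> measure (distr (brs_space P k) P (out_g g k)) B"
    and "measure (distr (brs_space P k) P (out_g g k)) B \<le> (\<Sum>i<k. (1 - p) ^ i * GB) + (1 - p) ^ k"
proof -
  interpret P: prob_space P by fact
  let ?U = "uniform_measure lborel {0..1::real}"
  define Nm where "Nm = P \<Otimes>\<^sub>M ?U"
  define Om where "Om = (\<Pi>\<^sub>M i\<in>(UNIV::nat set). Nm)"
  define R where "R = measure_pmf (pmf_of_set {..<k})"
  define S where "S = Om \<Otimes>\<^sub>M R"
  have S_eq: "brs_space P k = S" unfolding S_def Om_def Nm_def R_def brs_space_def by simp
  interpret U: prob_space ?U by (intro prob_space_uniform_measure) auto
  interpret Nm: prob_space Nm unfolding Nm_def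
    by (intro prob_space_pair P.prob_space_axioms U.prob_space_axioms)
  interpret Om: product_prob_space "\<lambda>_. Nm" "UNIV :: nat set" by unfold_locales
  interpret OmP: prob_space Om unfolding Om_def by (rule Om.prob_space_axioms)
  interpret R: prob_space R unfolding R_def by (rule measure_pmf.prob_space_axioms)
  interpret S: prob_space S unfolding S_def by (intro prob_space_pair OmP.prob_space_axioms R.prob_space_axioms)
  have gi: "integrable P g"
    by (rule P.integrable_const_bound[where B=1]) (use g01 in auto)
  have gBi: "integrable P (\<lambda>x. indicator B x * g x)"
    by (rule P.integrable_const_bound[where B=1]) (use g01 in \<open>auto simp: indicator_def\<close>)
  define AB where "AB = {z \<in> space Nm. fst z \<in> B \<and> snd z \<le> g (fst z)}"
  define Acc where "Acc = {z \<in> space Nm. fst z \<in> space P \<and> snd z \<le> g (fst z)}"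
  define Rej where "Rej = space Nm - Acc"
  have AB_s[measurable]: "AB \<in> sets Nm" unfolding AB_def Nm_def by measurable
  have Acc_s[measurable]: "Acc \<in> sets Nm" unfolding Acc_def Nm_def by measurable
  have Rej_s[measurable]: "Rej \<in> sets Nm" unfolding Rej_def by measurable
  have mAB: "measure Nm AB = GB"
  proof -
    have "emeasure Nm AB = (\<integral>\<^sup>+ x. indicator B x * ennreal (g x) \<partial>P)"
      unfolding AB_def Nm_def by (rule N_meas[OF Pp g g01 B])
    also have "\<dots> = (\<integral>\<^sup>+ x. ennreal (indicator B x * g x) \<partial>P)"
      by (intro nn_integral_cong) (auto simp: indicator_def)
    also have "\<dots> = ennreal GB" unfolding GB_def
      by (rule nn_integral_eq_integral[OF gBi]) (use g01 in \<open>auto simp: indicator_def\<close>)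
    finally show ?thesis unfolding Nm.emeasure_eq_measure
      using g01 by (simp add: GB_def)
  qed
  have mAcc: "measure Nm Acc = p"
  proof -
    have "emeasure Nm Acc = (\<integral>\<^sup>+ x. indicator (space P) x * ennreal (g x) \<partial>P)"
      unfolding Acc_def Nm_def by (rule N_meas[OF Pp g g01]) simp
    also have "\<dots> = (\<integral>\<^sup>+ x. ennreal (g x) \<partial>P)"
      by (intro nn_integral_cong) (auto simp: indicator_def)
    also have "\<dots> = ennreal p" unfolding p_def
      by (rule nn_integral_eq_integral[OF gi]) (use g01 in auto)
    finally show ?thesis unfolding Nm.emeasure_eq_measure
      using g01 by (simp add: p_def)
  qed
  have mRej: "measure Nm Rej = 1 - p"
    unfolding Rej_def using Nm.prob_compl[OF Acc_s] mAcc by simp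
  have p01: "0 \<le> 1 - p" using mRej by (metis measure_nonneg)
  have GB0: "0 \<le> GB" using mAB by (metis measure_nonneg)
  define E where "E i = {xs \<in> space Om. (\<forall>m<i. xs m \<in> Rej) \<and> xs i \<in> AB}" for i
  define F where "F = {xs \<in> space Om. \<forall>m<k. xs m \<in> Rej}"
  have spOm: "space Om = {xs. \<forall>i. xs i \<in> space Nm}"
    unfolding Om_def space_PiM by auto
  have E_emb: "E i = prod_emb UNIV (\<lambda>_. Nm) {..i} (Pi\<^sub>E {..i} (\<lambda>m. if m < i then Rej else AB))" for i
    unfolding E_def prod_emb_def spOm Om_def[symmetric] space_PiM[of UNIV "\<lambda>_. Nm", folded Om_def]
    by (auto simp: PiE_iff; metis atMost_iff less_imp_le_nat order_refl less_irrefl)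
  have F_emb: "F = prod_emb UNIV (\<lambda>_. Nm) {..<k} (Pi\<^sub>E {..<k} (\<lambda>m. Rej))"
    unfolding F_def prod_emb_def spOm Om_def[symmetric] space_PiM[of UNIV "\<lambda>_. Nm", folded Om_def]
    by (auto simp: PiE_iff)
  have E_s: "E i \<in> sets Om" for i
    unfolding E_emb Om_def by (rule sets_PiM_I) auto
  have F_s: "F \<in> sets Om"
    unfolding F_emb Om_def by (rule sets_PiM_I) auto
  have mE: "measure Om (E i) = (1 - p) ^ i * GB" for i
  proof -
    have "emeasure Om (E i) = (\<Prod>m\<in>{..i}. emeasure Nm (if m < i then Rej else AB))"
      unfolding E_emb Om_def by (rule emeasure_PiM_emb) (auto intro: Nm.prob_space_axioms)
    also have "\<dots> = (\<Prod>m\<in>{..<i}. emeasure Nm Rej) * emeasure Nm AB"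
      by (simp add: lessThan_Suc_atMost[symmetric])
    also have "\<dots> = ennreal ((1 - p) ^ i * GB)"
      unfolding Nm.emeasure_eq_measure mRej mAB using p01 GB0
      by (simp add: ennreal_power ennreal_mult)
    finally show ?thesis unfolding OmP.emeasure_eq_measure
      using p01 GB0 by simp
  qed
  have mF: "measure Om F = (1 - p) ^ k"
  proof -
    have "emeasure Om F = (\<Prod>m\<in>{..<k}. emeasure Nm Rej)"
      unfolding F_emb Om_def by (rule emeasure_PiM_emb) (auto intro: Nm.prob_space_axioms)
    also have "\<dots> = ennreal ((1 - p) ^ k)"
      unfolding Nm.emeasure_eq_measure mRej using p01
      by (simp add: ennreal_power)
    finally show ?thesis unfolding OmP.emeasure_eq_measure
      using p01 by simp
  qed
  have spR: "space R = UNIV" unfolding R_def by simp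
  have setsR: "sets R = UNIV" unfolding R_def by simp
  have mTimes: "measure S (A \<times> UNIV) = measure Om A" if "A \<in> sets Om" for A
  proof -
    have "emeasure S (A \<times> space R) = emeasure Om A * emeasure R (space R)"
      unfolding S_def by (rule R.emeasure_pair_measure_Times) (use that in auto)
    then show ?thesis unfolding spR S.emeasure_eq_measure OmP.emeasure_eq_measure
      using R.emeasure_space_1 spR by simp
  qed
  have disj: "disjoint_family_on E {..<k}"
    unfolding disjoint_family_on_def
  proof (intro ballI impI)
    have ABR: "AB \<inter> Rej = {}" using sets.sets_into_space[OF B] unfolding AB_def Rej_def Acc_def by auto
    fix m n :: nat assume "m \<noteq> n"
    then consider "m<n" | "n<m" by linarith
    then show "E m \<inter> E n = {}" using ABR unfolding E_def by cases blast+
  qed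
  have mU: "measure Om (\<Union>i\<in>{..<k}. E i) = (\<Sum>i<k. (1 - p) ^ i * GB)"
    by (subst measure_finite_Union) (use E_s disj mE in \<open>auto simp: OmP.emeasure_eq_measure\<close>)
  have U_s: "(\<Union>i\<in>{..<k}. E i) \<in> sets Om" using E_s by auto
  have meas: "out_g g k \<in> S \<rightarrow>\<^sub>M P" using out_g_meas[OF g, of k] S_eq by simp
  have spS: "space S = space Om \<times> UNIV" unfolding S_def by (simp add: space_pair_measure spR)
  define pre where "pre = out_g g k -` B \<inter> space S"
  have pre_s: "pre \<in> sets S" unfolding pre_def using meas B by measurable
  have md: "measure (distr (brs_space P k) P (out_g g k)) B = measure S pre"
    unfolding S_eq pre_def by (rule measure_distr[OF meas B])
  have accE: "snd (xs i) \<le> g (fst (xs i)) \<longleftrightarrow> xs i \<notin> Rej" if "xs \<in> space Om" for xs i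
  proof -
    have "xs i \<in> space Nm" using that spOm by auto
    moreover have "space Nm = space P \<times> UNIV" by (simp add: Nm_def space_pair_measure)
    ultimately show ?thesis unfolding Rej_def Acc_def by (cases "xs i") auto
  qed
  have sub1: "(\<Union>i\<in>{..<k}. E i) \<times> UNIV \<subseteq> pre"
  proof (rule subsetI)
    fix z :: "(nat \<Rightarrow> 'a \<times> real) \<times> nat" assume "z \<in> (\<Union>i\<in>{..<k}. E i) \<times> UNIV"
    then obtain xs j i where z: "z = (xs, j)" and i: "i \<in> {..<k}" and xs: "xs \<in> E i" by blast
    have xsO: "xs \<in> space Om" using xs unfolding E_def by blast
    have xAB: "xs i \<in> AB" using xs unfolding E_def by blast
    have acci: "snd (xs i) \<le> g (fst (xs i))" using xAB unfolding AB_def by blast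
    have xB: "fst (xs i) \<in> B" using xAB unfolding AB_def by blast
    have L: "(LEAST i. snd (xs i) \<le> g (fst (xs i))) = i"
    proof (rule Least_equality)
      show "snd (xs i) \<le> g (fst (xs i))" by fact
      fix m assume "snd (xs m) \<le> g (fst (xs m))"
      then have "xs m \<notin> Rej" using accE[OF xsO] by blast
      then show "i \<le> m" using xs unfolding E_def by (metis (no_types, lifting) mem_Collect_eq not_le)
    qed
    have ex: "\<exists>i<k. snd (xs i) \<le> g (fst (xs i))" using acci i by blast
    have "out_g g k (xs, j) = fst (xs i)" unfolding out_g_def Let_def fst_conv snd_conv
      using ex L by presburger
    then show "z \<in> pre" unfolding pre_def spS z using xB xsO by simp
  qed
  have sub2: "pre \<subseteq> (\<Union>i\<in>{..<k}. E i) \<times> UNIV \<union> F \<times> UNIV"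
  proof (rule subsetI)
    fix z :: "(nat \<Rightarrow> 'a \<times> real) \<times> nat" assume zp: "z \<in> pre"
    obtain xs j where z: "z = (xs, j)" by (cases z)
    show "z \<in> (\<Union>i\<in>{..<k}. E i) \<times> UNIV \<union> F \<times> UNIV"
    proof (cases "xs \<in> F")
      case True then show ?thesis using z by blast
    next
    case False
    have pr: "(xs, j) \<in> pre" using zp z by simp
    have nF: "(xs, j) \<notin> F \<times> UNIV" using False by blast
    have xsO: "xs \<in> space Om" using pr unfolding pre_def spS by blast
    obtain i0 where i0: "i0 < k" "xs i0 \<notin> Rej" using nF xsO unfolding F_def by blast
    let ?acc = "\<lambda>i. snd (xs i) \<le> g (fst (xs i))"
    have a0: "?acc i0" using i0(2) accE[OF xsO] by blast
    have ex: "\<exists>i<k. ?acc i" using i0(1) a0 by blast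
    define i where "i = (LEAST i. ?acc i)"
    have acci: "?acc i" unfolding i_def using a0 by (rule LeastI)
    have "i \<le> i0" unfolding i_def using a0 by (rule Least_le)
    then have ik: "i < k" using i0(1) by linarith
    have bef: "xs m \<in> Rej" if "m < i" for m
    proof -
      have "\<not> ?acc m" using not_less_Least[of m ?acc] that unfolding i_def by blast
      then show ?thesis using accE[OF xsO] by blast
    qed
    have "out_g g k (xs, j) = fst (xs i)" unfolding out_g_def Let_def fst_conv snd_conv i_def
      using ex by presburger
    moreover have "out_g g k (xs, j) \<in> B" using pr unfolding pre_def by blast
    ultimately have "fst (xs i) \<in> B" by simp
    moreover have "xs i \<in> space Nm" using xsO spOm by blast
    ultimately have "xs i \<in> AB" using acci unfolding AB_def by blast
    then have "xs \<in> E i" unfolding E_def using bef xsO by blast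
    then show ?thesis using ik z by blast
  qed
  qed
  show "(\<Sum>i<k. (1 - p) ^ i * GB) \<le> measure (distr (brs_space P k) P (out_g g k)) B"
    unfolding md mU[symmetric] mTimes[OF U_s, symmetric]
    by (rule S.finite_measure_mono[OF sub1 pre_s])
  have "measure S pre \<le> measure S ((\<Union>i\<in>{..<k}. E i) \<times> UNIV \<union> F \<times> UNIV)"
    by (rule S.finite_measure_mono[OF sub2]) (use U_s F_s in \<open>auto simp: S_def setsR\<close>)
  also have "\<dots> \<le> measure S ((\<Union>i\<in>{..<k}. E i) \<times> UNIV) + measure S (F \<times> UNIV)"
    by (rule measure_Un_le) (use U_s F_s in \<open>auto simp: S_def setsR\<close>)
  finally show "measure (distr (brs_space P k) P (out_g g k)) B \<le> (\<Sum>i<k. (1 - p) ^ i * GB) + (1 - p) ^ k"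
    unfolding md mTimes[OF U_s] mTimes[OF F_s] mU mF .
qed

lemma f_real:
  fixes f :: "real \<Rightarrow> ereal" and x :: real
  assumes f_nonneg: "\<And>x. 0 \<le> x \<Longrightarrow> 0 \<le> f x" and f_finite: "\<And>x. 0 < x \<Longrightarrow> f x \<noteq> \<infinity>"
    and "0 < x"
  shows "f x = ereal (real_of_ereal (f x))" and "0 \<le> real_of_ereal (f x)"
proof -
  have "0 \<le> f x" "f x \<noteq> \<infinity>" using assms(1)[of x] assms(2)[of x] assms(3) by auto
  then show "f x = ereal (real_of_ereal (f x))" "0 \<le> real_of_ereal (f x)"
    by (auto simp: ereal_real real_of_ereal_pos)
qed

lemma f_tangent:
  fixes f :: "real \<Rightarrow> ereal"
  assumes f_convex: "ext_convex_nonneg f"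
    and f_nonneg: "\<And>x. 0 \<le> x \<Longrightarrow> 0 \<le> f x"
    and f_finite: "\<And>x. 0 < x \<Longrightarrow> f x \<noteq> \<infinity>"
    and d: "((\<lambda>t. real_of_ereal (f t)) has_real_derivative c) (at a)"
    and a: "0 < a" and y: "0 < y"
  shows "c * (y - a) \<le> real_of_ereal (f y) - real_of_ereal (f a)"
proof -
  let ?phi = "\<lambda>t. real_of_ereal (f t)"
  have cv: "convex_on {0<..} ?phi"
  proof (rule convex_onI)
    fix t x z :: real assume t: "0 < t" "t < 1" and x: "x \<in> {0<..}" and z: "z \<in> {0<..}"
    have pos: "0 < (1 - t) * x + t * z" using t x z by (auto intro: add_pos_pos)
    have "f ((1 - t) * x + t * z) \<le> ereal (1 - t) * f x + ereal t * f z"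
      using f_convex t x z unfolding ext_convex_nonneg_def by auto
    also have "\<dots> = ereal ((1 - t) * ?phi x + t * ?phi z)"
    proof -
      have "0 \<le> f x" "f x \<noteq> \<infinity>" "0 \<le> f z" "f z \<noteq> \<infinity>"
        using f_nonneg f_finite x z by auto
      then obtain vx vz where fx: "f x = ereal vx" and fz: "f z = ereal vz"
        by (cases "f x"; cases "f z") auto
      show ?thesis by (simp add: fx fz)
    qed
    finally have le: "f ((1 - t) * x + t * z) \<le> ereal ((1 - t) * ?phi x + t * ?phi z)" .
    have "ereal (?phi ((1 - t) * x + t * z)) \<le> ereal ((1 - t) * ?phi x + t * ?phi z)"
    proof -
      have "0 \<le> f ((1 - t) * x + t * z)" "f ((1 - t) * x + t * z) \<noteq> \<infinity>"
        using f_nonneg f_finite pos by auto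
      then obtain w where "f ((1 - t) * x + t * z) = ereal w" by (cases "f ((1 - t) * x + t * z)") auto
      then show ?thesis using le by simp
    qed
    then show "?phi ((1 - t) *\<^sub>R x + t *\<^sub>R z) \<le> (1 - t) * ?phi x + t * ?phi z" by simp
  qed (rule convex_real_interval)
  show ?thesis
    by (rule convex_on_imp_above_tangent[OF cv])
       (use a y d in \<open>auto simp: interior_open intro: convex_connected has_field_derivative_at_within\<close>)
qed

theorem mainTheorem2:
  fixes P Q :: "'a::polish_space measure"
    and r :: "'a \<Rightarrow> real"
    and f :: "real \<Rightarrow> ereal"
    and \<epsilon> \<gamma> M :: real
    and k :: nat
  assumes P_prob: "prob_space P" and Q_prob: "prob_space Q"
    and P_sets: "sets P = sets borel" and Q_sets: "sets Q = sets borel"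
    and r_meas: "r \<in> borel_measurable P" and r_nonneg: "\<And>x. 0 \<le> r x"
    and r_dens: "Q = density P (\<lambda>x. ennreal (r x))"
    and f_convex: "ext_convex_nonneg f"
    and f_nonneg: "\<And>x. 0 \<le> x \<Longrightarrow> 0 \<le> f x"
    and f_finite: "\<And>x. 0 < x \<Longrightarrow> f x \<noteq> \<infinity>"
    and f_diff: "\<And>x. 0 < x \<Longrightarrow> (\<lambda>t. real_of_ereal (f t)) differentiable (at x)"
    and f_one: "f 1 = 0"
    and f'_one: "((\<lambda>t. real_of_ereal (f t)) has_real_derivative 0) (at 1)"
    and D_pos: "0 < fdiv P f r" and D_fin: "fdiv P f r < \<infinity>"
    and eps_pos: "0 < \<epsilon>"
    and gamma: "0 < \<gamma>" "\<gamma> < 1"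
    and M_pos: "0 < M"
    and M_deriv: "((\<lambda>t. real_of_ereal (f t)) has_real_derivative
                     (enn2real (fdiv P f r) / (\<gamma> * \<epsilon>))) (at (Mtilde P r M))"
    and k_pos: "0 < k"
    and k_bound: "real k \<ge> Mtilde P r M * ln (1 / ((1 - \<gamma>) * \<epsilon>))"
  shows "tv_dist (brs_law P r M k) Q \<le> \<epsilon>"
proof -
  interpret P: prob_space P by fact
  interpret Q: prob_space Q by fact
  note r_meas[measurable]
  have spP: "space P = UNIV" using P_sets by (metis sets_eq_imp_space_eq space_borel)
  have r1: "(\<integral>\<^sup>+ x. ennreal (r x) \<partial>P) = 1"
  proof -
    have sQ: "space Q = space P" unfolding r_dens by simp
    have "emeasure Q (space P) = (\<integral>\<^sup>+ x. ennreal (r x) * indicator (space P) x \<partial>P)"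
      unfolding r_dens by (rule emeasure_density) auto
    also have "\<dots> = (\<integral>\<^sup>+ x. ennreal (r x) \<partial>P)"
      by (intro nn_integral_cong) auto
    finally show ?thesis using Q.emeasure_space_1 sQ by simp
  qed
  have r_int: "integrable P r"
    by (rule integrableI_nn_integral_finite[where x=1]) (use r1 r_nonneg in auto)
  have r_int1: "(\<integral>x. r x \<partial>P) = 1"
    using nn_integral_eq_integral[OF r_int] r_nonneg r1 by simp
  have QB: "measure Q B = (\<integral>x. indicator B x * r x \<partial>P)" if B: "B \<in> sets P" for B
  proof -
    have ii: "integrable P (\<lambda>x. indicator B x * r x)"
      using integrable_real_mult_indicator[OF B r_int] by (simp add: mult.commute)
    have "emeasure Q B = (\<integral>\<^sup>+ x. ennreal (r x) * indicator B x \<partial>P)"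
      unfolding r_dens using B by (simp add: emeasure_density)
    also have "\<dots> = (\<integral>\<^sup>+ x. ennreal (indicator B x * r x) \<partial>P)"
      by (intro nn_integral_cong) (auto simp: indicator_def)
    also have "\<dots> = ennreal (\<integral>x. indicator B x * r x \<partial>P)"
      by (rule nn_integral_eq_integral[OF ii]) (use r_nonneg in auto)
    finally show ?thesis unfolding Q.emeasure_eq_measure
      using r_nonneg by (simp add: integral_nonneg_AE)
  qed
  define W where "W = Wfun P r M"
  have minint: "integrable P (\<lambda>x. min (r x) M)"
    by (rule P.integrable_const_bound[where B=M]) (use r_nonneg M_pos in auto)
  have W_le1: "W \<le> 1" unfolding W_def Wfun_def
    using integral_mono[OF minint r_int, of] r_int1 by (metis min.cobounded1)
  have W_leM: "W \<le> M" unfolding W_def Wfun_def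
    using integral_mono[OF minint P.integrable_const, of M] by (simp add: P.prob_space)
  have W_pos: "0 < W"
  proof (rule ccontr)
    assume "\<not> 0 < W"
    moreover have "0 \<le> W" unfolding W_def Wfun_def using r_nonneg M_pos by (simp add: integral_nonneg_AE)
    ultimately have "W = 0" by simp
    then have "AE x in P. min (r x) M = 0"
      using integral_nonneg_eq_0_iff_AE[OF minint] r_nonneg M_pos unfolding W_def Wfun_def by simp
    then have "AE x in P. ennreal (r x) = 0"
      by eventually_elim (use M_pos in \<open>auto simp: min_def split: if_splits\<close>)
    then have "(\<integral>\<^sup>+ x. ennreal (r x) \<partial>P) = 0" by (simp add: nn_integral_0_iff_AE)
    then show False using r1 by simp
  qed
  define Mt where "Mt = Mtilde P r M"
  have Mt_eq: "Mt = M / W" unfolding Mt_def Mtilde_def W_def by simp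
  have Mt_pos: "0 < Mt" using Mt_eq M_pos W_pos by simp
  define g where "g x = min (r x) M / M" for x
  have g_meas[measurable]: "g \<in> borel_measurable P" unfolding g_def by measurable
  have g01: "0 \<le> g x \<and> g x \<le> 1" for x unfolding g_def using r_nonneg[of x] M_pos by auto
  have acc_eq: "(\<lambda>x. rM P r M x / Mtilde P r M) = g"
    unfolding g_def rM_def Mtilde_def W_def[symmetric] using W_pos M_pos by (auto simp: fun_eq_iff)
  have law: "brs_law P r M k = distr (brs_space P k) P (out_g g k)"
    unfolding brs_law_def brs_out_def out_g_def acc_eq[symmetric] by simp
  define p where "p = (\<integral>x. g x \<partial>P)"
  have p_eq: "p = W / M" unfolding p_def g_def W_def Wfun_def by simp
  have p_pos: "0 < p" using p_eq W_pos M_pos by simp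
  have p_le1: "p \<le> 1" using p_eq W_leM M_pos by simp
  define a where "a = 1 - p"
  have a01: "0 \<le> a" "a < 1" using p_pos p_le1 a_def by auto
  have geo: "(\<Sum>i<n. a ^ i) * p = 1 - a ^ n" for n
    by (induction n) (auto simp: a_def algebra_simps)
  have ak: "a ^ k \<le> (1 - \<gamma>) * \<epsilon>"
  proof -
    have "a \<le> exp (- p)" unfolding a_def using exp_ge_add_one_self[of "-p"] by simp
    then have "a ^ k \<le> exp (- p) ^ k" using a01 by (intro power_mono) auto
    also have "\<dots> = exp (real k * (- p))" by (metis exp_of_nat_mult)
    also have "\<dots> = exp (- (k / Mt))"
    proof -
      have "p = 1 / Mt" using Mt_eq p_eq M_pos W_pos by simp
      then show ?thesis by simp
    qed
    also have "\<dots> \<le> (1 - \<gamma>) * \<epsilon>"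
    proof -
      have "ln (1 / ((1 - \<gamma>) * \<epsilon>)) \<le> k / Mt" using k_bound Mt_pos unfolding Mt_def[symmetric]
        by (simp add: field_simps mult.commute)
      then have "- (k / Mt) \<le> ln ((1 - \<gamma>) * \<epsilon>)" using gamma eps_pos by (simp add: ln_div)
      then have "exp (- (k / Mt)) \<le> exp (ln ((1 - \<gamma>) * \<epsilon>))" by simp
      then show ?thesis using gamma eps_pos by simp
    qed
    finally show ?thesis .
  qed
  define c where "c = enn2real (fdiv P f r) / (\<gamma> * \<epsilon>)"
  have c_pos: "0 < c" unfolding c_def using D_pos D_fin gamma eps_pos
    by (simp add: enn2real_positive_iff)
  define hp where "hp x = max (r x - Mt) 0" for x
  have hp_int: "integrable P hp" unfolding hp_def
    by (rule Bochner_Integration.integrable_bound[OF r_int]) (use r_nonneg Mt_pos in auto)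
  have hp_bound: "(\<integral>x. hp x \<partial>P) \<le> \<gamma> * \<epsilon>"
  proof -
    have pw: "ennreal (c * hp x) \<le> e2ennreal (f (r x))" for x
    proof (cases "r x \<le> Mt")
      case True then show ?thesis by (simp add: hp_def)
    next
      case False
      then have rpos: "0 < r x" using Mt_pos by simp
      have tan: "c * (r x - Mt) \<le> real_of_ereal (f (r x)) - real_of_ereal (f Mt)"
      proof -
        have dd: "((\<lambda>t. real_of_ereal (f t)) has_real_derivative c) (at Mt)"
          unfolding c_def Mt_def by (rule M_deriv)
        show ?thesis
          by (rule f_tangent[where f=f and c=c and a=Mt and y="r x"])
             (use f_convex f_nonneg f_finite dd Mt_pos rpos in auto)
      qed
      have "0 \<le> f Mt" using f_nonneg Mt_pos by simp
      then have "0 \<le> real_of_ereal (f Mt)" by (simp add: real_of_ereal_pos)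
      have "0 \<le> f (r x)" "f (r x) \<noteq> \<infinity>" using f_nonneg f_finite rpos by auto
      define v where "v = real_of_ereal (f (r x))"
      have fv: "f (r x) = ereal v" unfolding v_def using \<open>0 \<le> f (r x)\<close> \<open>f (r x) \<noteq> \<infinity>\<close>
        by (simp add: ereal_real)
      show ?thesis using tan False \<open>0 \<le> real_of_ereal (f Mt)\<close> by (simp add: hp_def fv ennreal_leI del: ennreal_le_iff)
    qed
    have "ennreal (c * (\<integral>x. hp x \<partial>P)) = ennreal (\<integral>x. c * hp x \<partial>P)" by simp
    also have "\<dots> = (\<integral>\<^sup>+ x. ennreal (c * hp x) \<partial>P)"
    proof -
      have cint: "integrable P (\<lambda>x. c * hp x)" using hp_int by simp
      have "AE x in P. 0 \<le> c * hp x" using c_pos by (auto simp: hp_def)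
      then show ?thesis by (rule nn_integral_eq_integral[OF cint, symmetric])
    qed
    also have "\<dots> \<le> fdiv P f r" unfolding fdiv_def by (intro nn_integral_mono pw)
    finally have le: "ennreal (c * (\<integral>x. hp x \<partial>P)) \<le> fdiv P f r" .
    have I0: "0 \<le> (\<integral>x. hp x \<partial>P)" by (intro integral_nonneg_AE) (auto simp: hp_def)
    have "enn2real (ennreal (c * (\<integral>x. hp x \<partial>P))) \<le> enn2real (fdiv P f r)"
      using enn2real_mono[OF le] D_fin by (simp add: top_unique)
    then have cI: "c * (\<integral>x. hp x \<partial>P) \<le> enn2real (fdiv P f r)" using I0 c_pos by simp
    have "(\<integral>x. hp x \<partial>P) \<le> enn2real (fdiv P f r) / c"
      using cI c_pos by (simp add: pos_le_divide_eq mult.commute)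
    also have "enn2real (fdiv P f r) / c = \<gamma> * \<epsilon>"
      using c_pos gamma eps_pos unfolding c_def by (simp add: field_simps)
    finally show ?thesis .
  qed
  define h where "h x = r x - min (r x) M / W" for x
  have h_int: "integrable P h" unfolding h_def using r_int minint by auto
  have h0: "(\<integral>x. h x \<partial>P) = 0" unfolding h_def using r_int minint r_int1 W_pos
    by (simp add: W_def Wfun_def)
  have hpos_le: "max (h x) 0 \<le> hp x" for x
  proof (cases "r x \<le> M")
    case True
    then have "r x \<le> r x / W" using r_nonneg[of x] W_pos W_le1 by (simp add: field_simps mult_left_le_one_le)
    then show ?thesis using True by (simp add: h_def hp_def)
  next
    case False then show ?thesis by (simp add: h_def hp_def Mt_eq)
  qed
  have hmax_int: "integrable P (\<lambda>x. max (h x) 0)" using h_int by auto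
  have hmax_bound: "(\<integral>x. max (h x) 0 \<partial>P) \<le> \<gamma> * \<epsilon>"
    using integral_mono[OF hmax_int hp_int hpos_le] hp_bound by linarith
  have main: "\<bar>measure (brs_law P r M k) B - measure Q B\<bar> \<le> \<epsilon>" if B: "B \<in> sets P" for B
  proof -
    define GB where "GB = (\<integral>x. indicator B x * g x \<partial>P)"
    define Sm where "Sm = (\<integral>x. indicator B x * (min (r x) M / W) \<partial>P)"
    have Sm_eq: "GB = p * Sm"
    proof -
      have "p * Sm = (\<integral>x. p * (indicator B x * (min (r x) M / W)) \<partial>P)" unfolding Sm_def by simp
      also have "\<dots> = GB" unfolding GB_def
        by (rule Bochner_Integration.integral_cong) (use M_pos W_pos in \<open>auto simp: p_eq g_def\<close>)
      finally show ?thesis by simp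
    qed
    have bnds: "(\<Sum>i<k. a ^ i * GB) \<le> measure (brs_law P r M k) B"
               "measure (brs_law P r M k) B \<le> (\<Sum>i<k. a ^ i * GB) + a ^ k"
      using sampling_bounds[OF P_prob g_meas g01 B, of k] unfolding law a_def p_def GB_def by auto
    have sumeq: "(\<Sum>i<k. a ^ i * GB) = (1 - a ^ k) * Sm"
    proof -
      have "(\<Sum>i<k. a ^ i * GB) = (\<Sum>i<k. a ^ i) * GB" by (simp add: sum_distrib_right)
      also have "\<dots> = ((\<Sum>i<k. a ^ i) * p) * Sm" by (simp add: Sm_eq mult.assoc)
      also have "\<dots> = (1 - a ^ k) * Sm" by (simp only: geo)
      finally show ?thesis .
    qed
    have iB: "integrable P (\<lambda>x. indicator B x * h x)"
      using integrable_real_mult_indicator[OF B h_int] by (simp add: mult.commute)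
    have iBr: "integrable P (\<lambda>x. indicator B x * r x)"
      using integrable_real_mult_indicator[OF B r_int] by (simp add: mult.commute)
    have iBm: "integrable P (\<lambda>x. indicator B x * (min (r x) M / W))"
      using integrable_real_mult_indicator[OF B integrable_divide[OF minint, of W]] by (simp add: mult.commute)
    have QS: "measure Q B - Sm = (\<integral>x. indicator B x * h x \<partial>P)"
    proof -
      have "(\<integral>x. indicator B x * h x \<partial>P) = (\<integral>x. indicator B x * r x - indicator B x * (min (r x) M / W) \<partial>P)"
        by (rule Bochner_Integration.integral_cong) (simp_all add: h_def right_diff_distrib)
      also have "\<dots> = measure Q B - Sm" unfolding QB[OF B] Sm_def
        by (rule Bochner_Integration.integral_diff[OF iBr iBm])
      finally show ?thesis by simp
    qed
    have up: "(\<integral>x. indicator B x * h x \<partial>P) \<le> \<gamma> * \<epsilon>"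
    proof -
      have "(\<integral>x. indicator B x * h x \<partial>P) \<le> (\<integral>x. max (h x) 0 \<partial>P)"
        by (rule integral_mono[OF iB hmax_int]) (auto simp: indicator_def)
      then show ?thesis using hmax_bound by linarith
    qed
    have lo: "- (\<integral>x. indicator B x * h x \<partial>P) \<le> \<gamma> * \<epsilon>"
    proof -
      have "(\<integral>x. - (indicator B x * h x) \<partial>P) \<le> (\<integral>x. max (h x) 0 - h x \<partial>P)"
        by (rule integral_mono) (use iB hmax_int h_int in \<open>auto simp: indicator_def\<close>)
      also have "\<dots> = (\<integral>x. max (h x) 0 \<partial>P)"
        using Bochner_Integration.integral_diff[OF hmax_int h_int] h0 by simp
      finally show ?thesis using hmax_bound by simp
    qed
    have Sm0: "0 \<le> Sm" unfolding Sm_def using r_nonneg W_pos M_pos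
      by (intro integral_nonneg_AE) (auto simp: indicator_def)
    have Sm1: "Sm \<le> 1"
    proof -
      have "Sm \<le> (\<integral>x. min (r x) M / W \<partial>P)" unfolding Sm_def
        by (rule integral_mono) (use iBm minint r_nonneg W_pos M_pos in \<open>auto simp: indicator_def\<close>)
      also have "\<dots> = 1" using W_pos by (simp add: W_def Wfun_def)
      finally show ?thesis .
    qed
    have ak0: "0 \<le> a ^ k" using a01 by simp
    have "0 \<le> a ^ k * Sm" "a ^ k * Sm \<le> a ^ k" using ak0 Sm0 Sm1 by (auto intro: mult_left_le)
    then show ?thesis using bnds sumeq QS up lo ak by (simp add: algebra_simps abs_le_iff)
  qed
  show ?thesis unfolding tv_dist_def
  proof (rule cSUP_least)
    show "sets Q \<noteq> {}" by (metis empty_iff sets.empty_sets)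
    fix B assume "B \<in> sets Q"
    then have "B \<in> sets P" using Q_sets P_sets by simp
    then show "\<bar>measure (brs_law P r M k) B - measure Q B\<bar> \<le> \<epsilon>" by (rule main)
  qed
qed

end
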